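(* Let $n\ge1$, $\boldsymbol\mu\in\mathcal S_n^\cup$, $\boldsymbol\xi\in\mathbb R^n$, $\mathbf y=\boldsymbol\mu+\boldsymbol\xi$, $\hat{\boldsymbol\mu}=\Pi_{\mathcal S_n^\cup}(\mathbf y)$, and let $(\hat T_1,\dots,\hat T_{\hat q})$, $\hat q=q(\hat{\boldsymbol\mu})$, be a partition of $\{1,\dots,n\}$ into sets of consecutive integers such that $\hat{\boldsymbol\mu}$ is affine on each $\hat T_j$. Then $$\|\hat{\boldsymbol\mu}-\boldsymbol\mu\|_2^2\le\sum_{j=1}^{\hat q}\big\|\Pi_{\mathcal S^\cap_{|\hat T_j|}}(\boldsymbol\xi_{\hat T_j})\big\|_2^2 .$$
   Context: For $m\ge3$, $\mathcal S_m^\cup=\{\mathbf u\in\mathbb R^m:2u_i\le u_{i+1}+u_{i-1},\ i=2,\dots,m-1\}$; $\mathcal S_1^\cup=\mathbb R$, $\mathcal S_2^\cup=\mathbb R^2$; $\mathcal S_m^\cap=-\mathcal S_m^\cup$ (concave sequences). $\Pi_K$ is Euclidean projection onto $K$. For $\mathbf u\in\mathcal S_n^\cup$, $q(\mathbf u)$ is one plus the number of strict inequalities $2u_i<u_{i+1}+u_{i-1}$, i.e. the number of affine pieces. For $T=\{t_1<\dots<t_{|T|}\}$, $\boldsymbol\xi_T=(\xi_{t_1},\dots,\xi_{t_{|T|}})^T$. *)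

theory Defs
  imports Complex_Main
begin

text \<open>Vectors of R^m are represented as functions nat => real, with components
  indexed 0..m-1 (component i here is component i+1 of the paper), and
  vanishing outside {0..<m}.\<close>

definition vec_space :: "nat \<Rightarrow> (nat \<Rightarrow> real) set" where
  "vec_space m = {u. \<forall>i\<ge>m. u i = 0}"

definition cvx_cone :: "nat \<Rightarrow> (nat \<Rightarrow> real) set" where
  "cvx_cone m = {u \<in> vec_space m. \<forall>i. 1 \<le> i \<and> i + 1 < m \<longrightarrow> 2 * u i \<le> u (i + 1) + u (i - 1)}"

definition ccv_cone :: "nat \<Rightarrow> (nat \<Rightarrow> real) set" where
  "ccv_cone m = uminus ` cvx_cone m"

definition sqdist :: "nat \<Rightarrow> (nat \<Rightarrow> real) \<Rightarrow> (nat \<Rightarrow> real) \<Rightarrow> real" where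
  "sqdist m u v = (\<Sum>i<m. (u i - v i)^2)"

definition sqnorm :: "nat \<Rightarrow> (nat \<Rightarrow> real) \<Rightarrow> real" where
  "sqnorm m u = (\<Sum>i<m. (u i)^2)"

definition proj :: "nat \<Rightarrow> (nat \<Rightarrow> real) set \<Rightarrow> (nat \<Rightarrow> real) \<Rightarrow> (nat \<Rightarrow> real)" where
  "proj m K y = (THE x. x \<in> K \<and> (\<forall>z\<in>K. sqdist m y x \<le> sqdist m y z))"

text \<open>Number of affine pieces q(u) of a convex sequence u in R^n.\<close>
definition num_pieces :: "nat \<Rightarrow> (nat \<Rightarrow> real) \<Rightarrow> nat" where
  "num_pieces n u = 1 + card {i. 1 \<le> i \<and> i + 1 < n \<and> 2 * u i < u (i + 1) + u (i - 1)}"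

definition subvec :: "(nat \<Rightarrow> real) \<Rightarrow> nat set \<Rightarrow> nat \<Rightarrow> real" where
  "subvec x T k = (if k < card T then x (sorted_list_of_set T ! k) else 0)"

end

theory Submission
  imports Defs
begin


definition good :: "nat \<Rightarrow> (nat \<Rightarrow> real) set \<Rightarrow> bool" where
 "good m K \<longleftrightarrow> K \<subseteq> vec_space m \<and> K \<noteq> {} \<and>
   (\<forall>x z t. x \<in> K \<longrightarrow> z \<in> K \<longrightarrow> 0 \<le> t \<longrightarrow> t \<le> 1 \<longrightarrow> (\<lambda>i. (1-t)*x i + t*z i) \<in> K) \<and>
   (\<forall>X L. (\<forall>k. X k \<in> K) \<longrightarrow> (\<forall>i. (\<lambda>k. X k i) \<longlonglongrightarrow> L i) \<longrightarrow> L \<in> K)"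

lemma sqdist_nonneg: "0 \<le> sqdist m u v"
  unfolding sqdist_def by (simp add: sum_nonneg)

lemma par_id: "sqdist m a b = 2 * sqdist m y a + 2 * sqdist m y b
   - 4 * sqdist m y (\<lambda>i. (1 - 1/2)*a i + 1/2 * b i)"
proof -
  have "sqdist m a b = (\<Sum>i<m. 2*(y i - a i)^2 + 2*(y i - b i)^2 - 4*(y i - ((1 - 1/2)*a i + 1/2 * b i))^2)"
    unfolding sqdist_def by (rule sum.cong) (auto simp: power2_eq_square algebra_simps)
  then show ?thesis unfolding sqdist_def by (simp add: sum.distrib sum_subtractf sum_distrib_left)
qed

lemma proj_exists:
  assumes g: "good m K"
  shows "\<exists>x\<in>K. \<forall>z\<in>K. sqdist m y x \<le> sqdist m y z"
proof -
  define f where "f z = sqdist m y z" for z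
  define d where "d = Inf (f ` K)"
  have ne: "K \<noteq> {}" using g good_def by auto
  have bdd: "bdd_below (f ` K)" unfolding f_def by (rule bdd_belowI[of _ 0]) (auto simp: sqdist_nonneg)
  have dle: "\<And>z. z \<in> K \<Longrightarrow> d \<le> f z" unfolding d_def using bdd by (auto intro: cInf_lower)
  have "\<forall>k. \<exists>x\<in>K. f x < d + 1/(real k+1)"
  proof
    fix k
    have "Inf (f ` K) < d + 1/(real k+1)" unfolding d_def by (simp add: add_pos_pos)
    then obtain v where "v \<in> f ` K" "v < d + 1/(real k+1)"
      using cInf_lessD[of "f ` K"] ne by blast
    then show "\<exists>x\<in>K. f x < d + 1/(real k+1)" by auto
  qed
  then obtain X where XK: "\<And>k. X k \<in> K" and Xf: "\<And>k. f (X k) < d + 1/(real k+1)" by metis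
  have conv: "\<And>x z t. x \<in> K \<Longrightarrow> z \<in> K \<Longrightarrow> 0 \<le> t \<Longrightarrow> t \<le> 1 \<Longrightarrow> (\<lambda>i. (1-t)*x i + t*z i) \<in> K"
    using g good_def by blast
  have dist_bd: "sqdist m (X k) (X l) \<le> 2/(real k+1) + 2/(real l+1)" for k l
  proof -
    have "d \<le> f (\<lambda>i. (1 - 1/2)*X k i + 1/2 * X l i)" by (rule dle, rule conv) (auto simp: XK)
    then show ?thesis using par_id[of m "X k" "X l" y] Xf[of k] Xf[of l] unfolding f_def by linarith
  qed
  have vs: "\<And>k i. i \<ge> m \<Longrightarrow> X k i = 0" using g XK unfolding good_def vec_space_def by blast
  have coord: "(X k i - X l i)^2 \<le> 2/(real k+1) + 2/(real l+1)" for k l i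
  proof (cases "i < m")
    case True
    have "(X k i - X l i)^2 \<le> sqdist m (X k) (X l)" unfolding sqdist_def
      by (rule member_le_sum[where f="\<lambda>i. (X k i - X l i)^2"]) (use True in auto)
    then show ?thesis using dist_bd[of k l] by linarith
  next
    case False then show ?thesis using vs by (simp add: add_nonneg_nonneg)
  qed
  have cau: "Cauchy (\<lambda>k. X k i)" for i
  proof (rule CauchyI)
    fix e :: real assume e: "0 < e"
    obtain N :: nat where N: "4 / e^2 < real N" using reals_Archimedean2 by blast
    show "\<exists>M. \<forall>k\<ge>M. \<forall>l\<ge>M. norm (X k i - X l i) < e"
    proof (intro exI allI impI)
      fix k l assume k: "N \<le> k" and l: "N \<le> l"
      have e2: "0 < e^2" using e by simp
      have "4 / e^2 < real N + 1" using N by simp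
      hence h: "4 < e^2 * (real N + 1)" using e2 by (simp add: field_simps)
      have a: "2/(real k+1) \<le> 2/(real N+1)" using k by (simp add: frac_le)
      have b: "2/(real l+1) \<le> 2/(real N+1)" using l by (simp add: frac_le)
      have "4/(real N+1) < e^2" using h by (simp add: field_simps)
      hence "(X k i - X l i)^2 < e^2" using coord[of k i l] a b by linarith
      hence "\<bar>X k i - X l i\<bar> < \<bar>e\<bar>" using power2_less_imp_less abs_ge_zero
        by (metis power2_abs abs_ge_zero power_less_imp_less_base)
      then show "norm (X k i - X l i) < e" using e by simp
    qed
  qed
  define L where "L i = lim (\<lambda>k. X k i)" for i
  have lim: "\<And>i. (\<lambda>k. X k i) \<longlonglongrightarrow> L i"
    unfolding L_def using cau by (simp add: Cauchy_convergent_iff convergent_LIMSEQ_iff)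
  have LK: "L \<in> K" using g lim XK unfolding good_def by blast
  have t1: "(\<lambda>k. f (X k)) \<longlonglongrightarrow> f L" unfolding f_def sqdist_def
    by (intro tendsto_intros lim)
  have t2: "(\<lambda>k. f (X k)) \<longlonglongrightarrow> d"
  proof (rule real_tendsto_sandwich[where f="\<lambda>k. d" and h="\<lambda>k. d + 1/(real k+1)"])
    show "\<forall>\<^sub>F k in sequentially. d \<le> f (X k)" using dle XK by auto
    show "\<forall>\<^sub>F k in sequentially. f (X k) \<le> d + 1/(real k+1)" using Xf by (simp add: less_imp_le)
    show "(\<lambda>k. d) \<longlonglongrightarrow> d" by simp
    have "(\<lambda>k. 1/(real k+1)) \<longlonglongrightarrow> 0" using LIMSEQ_inverse_real_of_nat by (simp add: inverse_eq_divide add.commute)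
    then show "(\<lambda>k. d + 1/(real k+1)) \<longlonglongrightarrow> d" using tendsto_add[of "\<lambda>k. d" d] by fastforce
  qed
  have "f L = d" using t1 t2 LIMSEQ_unique by blast
  then show ?thesis using LK dle unfolding f_def by auto
qed

lemma good_sub: "good m K \<Longrightarrow> x \<in> K \<Longrightarrow> i \<ge> m \<Longrightarrow> x i = 0"
  unfolding good_def vec_space_def by (elim conjE) blast

lemma good_conv: "good m K \<Longrightarrow> x \<in> K \<Longrightarrow> z \<in> K \<Longrightarrow> 0 \<le> t \<Longrightarrow> t \<le> 1 \<Longrightarrow> (\<lambda>i. (1-t)*x i + t*z i) \<in> K"
  unfolding good_def by (elim conjE) blast

lemma proj_unique:
  assumes g: "good m K" and x: "x \<in> K" "\<forall>z\<in>K. sqdist m y x \<le> sqdist m y z"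
    and x': "x' \<in> K" "\<forall>z\<in>K. sqdist m y x' \<le> sqdist m y z"
  shows "x' = x"
proof -
  have conv: "(\<lambda>i. (1 - 1/2)*x i + 1/2 * x' i) \<in> K" using good_conv[OF g x(1) x'(1), of "1/2"] by simp
  have "sqdist m y x \<le> sqdist m y (\<lambda>i. (1 - 1/2)*x i + 1/2 * x' i)" using x conv by blast
  moreover have "sqdist m y x = sqdist m y x'" using x x' by (meson order_antisym)
  ultimately have z: "sqdist m x x' \<le> 0" using par_id[of m x x' y] by linarith
  have "\<forall>i\<in>{..<m}. (x i - x' i)^2 = 0"
    using z sum_nonneg_eq_0_iff[of "{..<m}" "\<lambda>i. (x i - x' i)^2"] sqdist_nonneg[of m x x']
    unfolding sqdist_def by auto
  then have "\<And>i. i < m \<Longrightarrow> x i = x' i" by auto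
  moreover have "\<And>i. i \<ge> m \<Longrightarrow> x i = x' i" using good_sub[OF g x(1)] good_sub[OF g x'(1)] by auto
  ultimately show ?thesis by (metis linorder_not_le ext)
qed

lemma proj_props:
  assumes g: "good m K"
  shows "proj m K y \<in> K \<and> (\<forall>z\<in>K. sqdist m y (proj m K y) \<le> sqdist m y z)"
proof -
  obtain x where x: "x \<in> K" "\<forall>z\<in>K. sqdist m y x \<le> sqdist m y z" using proj_exists[OF g] by blast
  have "\<exists>!x. x \<in> K \<and> (\<forall>z\<in>K. sqdist m y x \<le> sqdist m y z)"
    using x proj_unique[OF g] by blast
  then show ?thesis unfolding proj_def by (rule theI')
qed

lemma proj_VI:
  assumes g: "good m K" and z: "z \<in> K"
  shows "(\<Sum>i<m. (y i - proj m K y i) * (z i - proj m K y i)) \<le> 0"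
proof -
  define x where "x = proj m K y"
  have xK: "x \<in> K" and opt: "\<forall>z\<in>K. sqdist m y x \<le> sqdist m y z"
    using proj_props[OF g] unfolding x_def by auto
  define A where "A = (\<Sum>i<m. (y i - x i) * (z i - x i))"
  define B where "B = (\<Sum>i<m. (z i - x i)^2)"
  have B0: "0 \<le> B" unfolding B_def by (simp add: sum_nonneg)
  have key: "0 \<le> - 2 * t * A + t^2 * B" if t: "0 \<le> t" "t \<le> 1" for t
  proof -
    have "(\<lambda>i. (1-t)*x i + t*z i) \<in> K" using g xK z t unfolding good_def by blast
    hence le: "sqdist m y x \<le> sqdist m y (\<lambda>i. (1-t)*x i + t*z i)" using opt by blast
    have "sqdist m y (\<lambda>i. (1-t)*x i + t*z i) = (\<Sum>i<m. (y i - x i)^2 + (- 2 * t) * ((y i - x i) * (z i - x i)) + t^2 * (z i - x i)^2)"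
      unfolding sqdist_def by (rule sum.cong) (auto simp: power2_eq_square algebra_simps)
    also have "\<dots> = sqdist m y x - 2 * t * A + t^2 * B"
      unfolding sqdist_def A_def B_def by (simp add: sum.distrib sum_subtractf sum_distrib_left)
    finally show ?thesis using le by linarith
  qed
  have "A \<le> 0"
  proof (rule ccontr)
    assume "\<not> A \<le> 0" hence A: "A > 0" by simp
    show False
    proof (cases "B = 0")
      case True then show ?thesis using key[of 1] A by simp
    next
      case False
      hence Bp: "B > 0" using B0 by simp
      define t where "t = min 1 (A / B)"
      have t0: "0 < t" unfolding t_def using A Bp by simp
      have t1: "t \<le> 1" "t \<le> A / B" unfolding t_def by auto
      have "t * B \<le> A" using t1 Bp by (simp add: field_simps)
      hence "t^2 * B \<le> t * A" using t0 by (simp add: power2_eq_square mult.assoc mult_left_mono)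
      moreover have "0 < t * A" using t0 A by simp
      ultimately show False using key[of t] t0 t1 by linarith
    qed
  qed
  then show ?thesis unfolding A_def x_def .
qed

lemma good_cvx: "good m (cvx_cone m)"
  unfolding good_def
proof (intro conjI allI impI)
  show "cvx_cone m \<subseteq> vec_space m" unfolding cvx_cone_def by auto
  have "(\<lambda>i. 0) \<in> cvx_cone m" unfolding cvx_cone_def vec_space_def by auto
  then show "cvx_cone m \<noteq> {}" by auto
  fix x z :: "nat \<Rightarrow> real" and t :: real
  assume x: "x \<in> cvx_cone m" and z: "z \<in> cvx_cone m" and t: "0 \<le> t" "t \<le> 1"
  show "(\<lambda>i. (1-t)*x i + t*z i) \<in> cvx_cone m"
    unfolding cvx_cone_def vec_space_def
  proof (intro CollectI conjI allI impI)
    fix i assume "m \<le> i" then show "(1-t)*x i + t*z i = 0" using x z unfolding cvx_cone_def vec_space_def by auto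
  next
    fix i assume i: "1 \<le> i \<and> i + 1 < m"
    have a: "2 * x i \<le> x (i+1) + x (i-1)" using x i unfolding cvx_cone_def by auto
    have b: "2 * z i \<le> z (i+1) + z (i-1)" using z i unfolding cvx_cone_def by auto
    have "(1-t) * (2 * x i) \<le> (1-t) * (x (i+1) + x (i-1))" using a t by (intro mult_left_mono) auto
    moreover have "t * (2 * z i) \<le> t * (z (i+1) + z (i-1))" using b t by (intro mult_left_mono) auto
    ultimately show "2 * ((1-t)*x i + t*z i) \<le> ((1-t)*x (i+1) + t*z (i+1)) + ((1-t)*x (i-1) + t*z (i-1))"
      by (simp add: algebra_simps)
  qed
next
  fix X :: "nat \<Rightarrow> nat \<Rightarrow> real" and L
  assume X: "\<forall>k. X k \<in> cvx_cone m" and lim: "\<forall>i. (\<lambda>k. X k i) \<longlonglongrightarrow> L i"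
  show "L \<in> cvx_cone m" unfolding cvx_cone_def vec_space_def
  proof (intro CollectI conjI allI impI)
    fix i assume i: "m \<le> i"
    have "(\<lambda>k. X k i) = (\<lambda>k. 0)" using X i unfolding cvx_cone_def vec_space_def by auto
    then show "L i = 0" using lim LIMSEQ_unique[OF _ tendsto_const] by metis
  next
    fix i assume i: "1 \<le> i \<and> i + 1 < m"
    have t1: "(\<lambda>k. 2 * X k i) \<longlonglongrightarrow> 2 * L i" using lim by (intro tendsto_intros) auto
    have t2: "(\<lambda>k. X k (i+1) + X k (i-1)) \<longlonglongrightarrow> L (i+1) + L (i-1)" using lim by (intro tendsto_intros) auto
    have ev: "\<forall>\<^sub>F k in sequentially. 2 * X k i \<le> X k (i+1) + X k (i-1)"
      using X i unfolding cvx_cone_def by auto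
    show "2 * L i \<le> L (i+1) + L (i-1)" by (rule tendsto_le[OF sequentially_bot t2 t1 ev])
  qed
qed

lemma ccv_iff: "x \<in> ccv_cone m \<longleftrightarrow> (\<lambda>i. - x i) \<in> cvx_cone m"
proof
  assume "x \<in> ccv_cone m" then obtain u where "u \<in> cvx_cone m" "x = - u" unfolding ccv_cone_def by auto
  then show "(\<lambda>i. - x i) \<in> cvx_cone m" by simp
next
  assume "(\<lambda>i. - x i) \<in> cvx_cone m"
  moreover have "x = - (\<lambda>i. - x i)" by auto
  ultimately show "x \<in> ccv_cone m" unfolding ccv_cone_def by blast
qed

lemma good_ccv: "good m (ccv_cone m)"
proof -
  have g: "good m (cvx_cone m)" by (rule good_cvx)
  have sub: "cvx_cone m \<subseteq> vec_space m" using g unfolding good_def by (elim conjE)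
  have cv: "\<And>x z t. x \<in> cvx_cone m \<Longrightarrow> z \<in> cvx_cone m \<Longrightarrow> 0 \<le> t \<Longrightarrow> t \<le> 1 \<Longrightarrow> (\<lambda>i. (1-t)*x i + t*z i) \<in> cvx_cone m"
    using g unfolding good_def by (elim conjE) blast
  have cl: "\<And>X L. (\<forall>k. X k \<in> cvx_cone m) \<Longrightarrow> (\<forall>i. (\<lambda>k. X k i) \<longlonglongrightarrow> L i) \<Longrightarrow> L \<in> cvx_cone m"
    using g unfolding good_def by (elim conjE) blast
  show ?thesis unfolding good_def
  proof (intro conjI allI impI)
    show "ccv_cone m \<subseteq> vec_space m"
    proof
      fix x assume "x \<in> ccv_cone m"
      then have "(\<lambda>i. - x i) \<in> vec_space m" using sub unfolding ccv_iff by blast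
      then show "x \<in> vec_space m" unfolding vec_space_def by auto
    qed
    have "(\<lambda>i. 0) \<in> cvx_cone m" unfolding cvx_cone_def vec_space_def by auto
    then have "(\<lambda>i. 0) \<in> ccv_cone m" unfolding ccv_iff by simp
    then show "ccv_cone m \<noteq> {}" by auto
    fix x z :: "nat \<Rightarrow> real" and t :: real
    assume a: "x \<in> ccv_cone m" "z \<in> ccv_cone m" "0 \<le> t" "t \<le> 1"
    have "(\<lambda>i. (1-t)*(- x i) + t*(- z i)) \<in> cvx_cone m"
      using cv[of "\<lambda>i. - x i" "\<lambda>i. - z i" t] a unfolding ccv_iff by simp
    then show "(\<lambda>i. (1-t)*x i + t*z i) \<in> ccv_cone m" unfolding ccv_iff by simp
  next
    fix X :: "nat \<Rightarrow> nat \<Rightarrow> real" and L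
    assume a: "\<forall>k. X k \<in> ccv_cone m" "\<forall>i. (\<lambda>k. X k i) \<longlonglongrightarrow> L i"
    have "(\<lambda>i. - L i) \<in> cvx_cone m"
    proof (rule cl[of "\<lambda>k i. - X k i"])
      show "\<forall>k. (\<lambda>i. - X k i) \<in> cvx_cone m" using a(1) unfolding ccv_iff by simp
      show "\<forall>i. (\<lambda>k. - X k i) \<longlonglongrightarrow> - L i" using a(2) by (simp add: tendsto_minus)
    qed
    then show "L \<in> ccv_cone m" unfolding ccv_iff .
  qed
qed

lemma ccv_add: assumes "x \<in> ccv_cone m" "z \<in> ccv_cone m" shows "(\<lambda>i. x i + z i) \<in> ccv_cone m"
proof -
  have a: "(\<lambda>i. - x i) \<in> cvx_cone m" "(\<lambda>i. - z i) \<in> cvx_cone m" using assms unfolding ccv_iff by auto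
  show ?thesis unfolding ccv_iff cvx_cone_def vec_space_def
  proof (intro CollectI conjI allI impI)
    fix i assume "m \<le> i" then show "- (x i + z i) = 0" using a unfolding cvx_cone_def vec_space_def by simp
  next
    fix i assume i: "1 \<le> i \<and> i + 1 < m"
    then show "2 * - (x i + z i) \<le> - (x (i + 1) + z (i + 1)) + - (x (i - 1) + z (i - 1))"
      using a unfolding cvx_cone_def by fastforce
  qed
qed



lemma reidx: fixes g :: "nat \<Rightarrow> 'a::comm_monoid_add" shows "a \<le> b \<Longrightarrow> (\<Sum>i\<in>{a..<b}. g i) = (\<Sum>k<b-a. g (a+k))"
  using sum.shift_bounds_nat_ivl[of g 0 a "b-a"] by (simp add: lessThan_atLeast0 add.commute)

lemma block:
  fixes xi mu muhat :: "nat \<Rightarrow> real"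
  assumes ab: "a < b" "b \<le> n" and mu: "mu \<in> cvx_cone n"
    and aff: "\<forall>i\<in>{a..<b}. muhat i = \<alpha> + \<beta> * real i"
  shows "(\<Sum>i\<in>{a..<b}. xi i * (muhat i - mu i))
     \<le> sqnorm (card {a..<b}) (proj (card {a..<b}) (ccv_cone (card {a..<b})) (subvec xi {a..<b})) / 2
       + (\<Sum>i\<in>{a..<b}. (muhat i - mu i)^2) / 2"
proof -
  define m where "m = b - a"
  have cm: "card {a..<b} = m" unfolding m_def by simp
  define D where "D i = muhat i - mu i" for i
  define s where "s = subvec xi {a..<b}"
  have s: "\<And>k. k < m \<Longrightarrow> s k = xi (a+k)"
    unfolding s_def subvec_def cm by (simp add: m_def)
  define c where "c k = (if k < m then D (a+k) else 0)" for k
  have cc: "c \<in> ccv_cone m" unfolding ccv_iff cvx_cone_def vec_space_def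
  proof (intro CollectI conjI allI impI)
    fix k assume "m \<le> k" then show "- c k = 0" unfolding c_def by simp
  next
    fix k assume k: "1 \<le> k \<and> k + 1 < m"
    have k1: "a + (k - 1) = a + k - 1" "a + (k+1) = a + k + 1" using k by auto
    have cv: "2 * mu (a+k) \<le> mu (a+k+1) + mu (a+k-1)"
      using mu k ab unfolding cvx_cone_def m_def by auto
    have h0: "muhat (a+k) = \<alpha> + \<beta> * real (a+k)" using aff k unfolding m_def by auto
    have h1: "muhat (a+k+1) = \<alpha> + \<beta> * (real (a+k) + 1)" using aff k unfolding m_def by auto
    have in2: "a+k-1 \<in> {a..<b}" using k unfolding m_def by auto
    have r2: "real (a+k-1) = real (a+k) - 1" using k by (simp add: of_nat_diff)
    have h2: "muhat (a+k-1) = \<alpha> + \<beta> * (real (a+k) - 1)" using aff in2 r2 by metis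
    show "2 * - c k \<le> - c (k + 1) + - c (k - 1)"
    proof -
      have "k - 1 < m" "k < m" "k + 1 < m" using k by auto
      then show ?thesis using cv h0 h1 h2 unfolding c_def D_def k1 by (simp add: algebra_simps)
    qed
  qed
  define P where "P = proj m (ccv_cone m) s"
  have PK: "P \<in> ccv_cone m" using proj_props[OF good_ccv] unfolding P_def by blast
  have "(\<Sum>k<m. (s k - P k) * ((P k + c k) - P k)) \<le> 0"
    using proj_VI[OF good_ccv ccv_add[OF PK cc], of s] unfolding P_def by simp
  hence "(\<Sum>k<m. s k * c k) \<le> (\<Sum>k<m. P k * c k)"
    by (simp add: algebra_simps sum_subtractf)
  also have "\<dots> \<le> (\<Sum>k<m. (P k)^2 / 2 + (c k)^2 / 2)"
  proof (rule sum_mono)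
    fix k show "P k * c k \<le> (P k)^2 / 2 + (c k)^2 / 2"
      using sum_squares_ge_zero[of "P k - c k" 0] by (simp add: power2_eq_square algebra_simps)
  qed
  also have "\<dots> = sqnorm m P / 2 + (\<Sum>k<m. (c k)^2) / 2"
    unfolding sqnorm_def by (simp add: sum.distrib sum_divide_distrib)
  finally have main: "(\<Sum>k<m. s k * c k) \<le> sqnorm m P / 2 + (\<Sum>k<m. (c k)^2) / 2" .
  have e1: "(\<Sum>k<m. s k * c k) = (\<Sum>i\<in>{a..<b}. xi i * (muhat i - mu i))"
    unfolding reidx[OF less_imp_le[OF ab(1)]] m_def[symmetric]
    by (rule sum.cong) (auto simp: s c_def D_def)
  have e2: "(\<Sum>k<m. (c k)^2) = (\<Sum>i\<in>{a..<b}. (muhat i - mu i)^2)"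
    unfolding reidx[OF less_imp_le[OF ab(1)]] m_def[symmetric]
    by (rule sum.cong) (auto simp: c_def D_def)
  have "(\<Sum>i\<in>{a..<b}. xi i * (muhat i - mu i)) \<le> sqnorm m P / 2 + (\<Sum>i\<in>{a..<b}. (muhat i - mu i)^2) / 2"
    using main e1 e2 by simp
  then show ?thesis unfolding cm P_def s_def .
qed

theorem mainTheorem8:
  fixes n qhat :: nat and mu xi muhat :: "nat \<Rightarrow> real" and T :: "nat \<Rightarrow> nat set"
  assumes "n \<ge> 1"
    and "mu \<in> cvx_cone n"
    and "xi \<in> vec_space n"
    and "muhat = proj n (cvx_cone n) (\<lambda>i. mu i + xi i)"
    and "qhat = num_pieces n muhat"
    and "\<forall>j<qhat. \<exists>a b. a < b \<and> T j = {a..<b}"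
    and "\<forall>j<qhat. \<forall>k<qhat. j \<noteq> k \<longrightarrow> T j \<inter> T k = {}"
    and "(\<Union>j<qhat. T j) = {..<n}"
    and "\<forall>j<qhat. \<exists>\<alpha> \<beta>. \<forall>i\<in>T j. muhat i = \<alpha> + \<beta> * real i"
  shows "sqdist n muhat mu
           \<le> (\<Sum>j<qhat. sqnorm (card (T j))
                 (proj (card (T j)) (ccv_cone (card (T j))) (subvec xi (T j))))"
proof -
  define D where "D i = muhat i - mu i" for i
  define S where "S j = sqnorm (card (T j)) (proj (card (T j)) (ccv_cone (card (T j))) (subvec xi (T j)))" for j
  have vi: "(\<Sum>i<n. ((\<lambda>i. mu i + xi i) i - muhat i) * (mu i - muhat i)) \<le> 0"
    using proj_VI[OF good_cvx assms(2), of "\<lambda>i. mu i + xi i"] assms(4) by simp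
  have "(\<Sum>i<n. ((\<lambda>i. mu i + xi i) i - muhat i) * (mu i - muhat i)) = (\<Sum>i<n. (D i)^2 - xi i * D i)"
    unfolding D_def by (rule sum.cong) (auto simp: power2_eq_square algebra_simps)
  with vi have step1: "(\<Sum>i<n. (D i)^2) \<le> (\<Sum>i<n. xi i * D i)" by (simp add: sum_subtractf)
  have part: "(\<Sum>i<n. g i) = (\<Sum>j<qhat. \<Sum>i\<in>T j. g i)" for g :: "nat \<Rightarrow> real"
  proof -
    have "(\<Sum>i<n. g i) = sum g (\<Union>(T ` {..<qhat}))" using assms(8) by simp
    also have "\<dots> = (\<Sum>j<qhat. sum g (T j))"
    proof (rule sum.UNION_disjoint)
      show "\<forall>j\<in>{..<qhat}. finite (T j)" using assms(6) by auto
      show "\<forall>j\<in>{..<qhat}. \<forall>k\<in>{..<qhat}. j \<noteq> k \<longrightarrow> T j \<inter> T k = {}" using assms(7) by auto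
    qed simp
    finally show ?thesis .
  qed
  have blk: "(\<Sum>i\<in>T j. xi i * D i) \<le> S j / 2 + (\<Sum>i\<in>T j. (D i)^2) / 2" if j: "j < qhat" for j
  proof -
    obtain a b where ab: "a < b" "T j = {a..<b}" using assms(6) j by blast
    obtain \<alpha> \<beta> where aff: "\<forall>i\<in>T j. muhat i = \<alpha> + \<beta> * real i" using assms(9) j by blast
    have "b - 1 \<in> T j" using ab by auto
    hence "b - 1 \<in> {..<n}" using assms(8) j by blast
    hence bn: "b \<le> n" using ab by auto
    show ?thesis using block[OF ab(1) bn assms(2), of muhat \<alpha> \<beta> xi] aff
      unfolding S_def D_def ab(2) by simp
  qed
  have "(\<Sum>i<n. (D i)^2) \<le> (\<Sum>j<qhat. \<Sum>i\<in>T j. xi i * D i)" using step1 part by simp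
  also have "\<dots> \<le> (\<Sum>j<qhat. S j / 2 + (\<Sum>i\<in>T j. (D i)^2) / 2)" by (rule sum_mono) (use blk in auto)
  also have "\<dots> = (\<Sum>j<qhat. S j) / 2 + (\<Sum>i<n. (D i)^2) / 2"
    using part[of "\<lambda>i. (D i)^2"] by (simp add: sum.distrib sum_divide_distrib)
  finally have "(\<Sum>i<n. (D i)^2) \<le> (\<Sum>j<qhat. S j)" by simp
  then show ?thesis unfolding sqdist_def D_def S_def .
qed

end
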